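(* Let $G$ be a group with identity $e$, $A$ a finite set with $|A|\ge2$, $S\subseteq G$ finite with $e\in S$, and suppose $(\mathcal P,f)$ generates a local map $\mu:A^S\to A$. Let $s\in S\setminus\{e\}$. (1) If there exist $p\in\mathcal P$ and $z\in\mathcal P^c$ with $\mathrm{Res}_s(p)=\mathrm{Res}_s(z)$, then $s$ is essential for $\mu$. (2) If $s$ is essential for $\mu$ and $f$ is well-behaved, then there exist $p\in\mathcal P$ and $z\in\mathcal P^c$ with $\mathrm{Res}_s(p)=\mathrm{Res}_s(z)$.
   Context: $A^S$ is the set of functions $S\to A$. For $s\in S$, $\mathrm{Res}_s:A^S\to A^{S\setminus\{s\}}$ is $\mathrm{Res}_s(z)=z|_{S\setminus\{s\}}$. An element $s\in S$ is essential for $\mu$ if there exist $z,w\in A^S$ with $\mathrm{Res}_s(z)=\mathrm{Res}_s(w)$ but $\mu(z)\neq\mu(w)$. The pair $(\mathcal P,f)$ generates $\mu$ if $\mathcal P=\{z\in A^S:\mu(z)\neq z(e)\}$ and $f:\mathcal P\to A$ is the restriction of $\mu$ to $\mathcal P$; $\mathcal P^c=A^S\setminus\mathcal P$. The function $f$ is well-behaved if for all $p,q\in\mathcal P$: $p(e)=q(e)$ if and only if $f(p)=f(q)$. *)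

theory Defs
  imports "HOL-Algebra.Group" "HOL-Library.FuncSet"
begin

(* Configurations A^S are the extensional functions S ->_E A. *)

definition Res :: "'g set \<Rightarrow> 'g \<Rightarrow> ('g \<Rightarrow> 'a) \<Rightarrow> ('g \<Rightarrow> 'a)" where
  "Res S s z = restrict z (S - {s})"

definition essential :: "'g set \<Rightarrow> 'a set \<Rightarrow> (('g \<Rightarrow> 'a) \<Rightarrow> 'a) \<Rightarrow> 'g \<Rightarrow> bool" where
  "essential S A \<mu> s \<longleftrightarrow>
     (\<exists>z \<in> S \<rightarrow>\<^sub>E A. \<exists>w \<in> S \<rightarrow>\<^sub>E A. Res S s z = Res S s w \<and> \<mu> z \<noteq> \<mu> w)"

definition generates :: "'g set \<Rightarrow> 'a set \<Rightarrow> 'g \<Rightarrow> ('g \<Rightarrow> 'a) set \<Rightarrow> (('g \<Rightarrow> 'a) \<Rightarrow> 'a)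
    \<Rightarrow> (('g \<Rightarrow> 'a) \<Rightarrow> 'a) \<Rightarrow> bool" where
  "generates S A e P f \<mu> \<longleftrightarrow>
     P = {z \<in> S \<rightarrow>\<^sub>E A. \<mu> z \<noteq> z e} \<and> (\<forall>p \<in> P. f p = \<mu> p)"

definition well_behaved :: "'g \<Rightarrow> ('g \<Rightarrow> 'a) set \<Rightarrow> (('g \<Rightarrow> 'a) \<Rightarrow> 'a) \<Rightarrow> bool" where
  "well_behaved e P f \<longleftrightarrow> (\<forall>p \<in> P. \<forall>q \<in> P. p e = q e \<longleftrightarrow> f p = f q)"

end

theory Submission
  imports Defs
begin

lemma Res_eq_e: "Res S s z = Res S s w \<Longrightarrow> e \<in> S \<Longrightarrow> e \<noteq> s \<Longrightarrow> z e = w e"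
  unfolding Res_def by (metis Diff_iff empty_iff insert_iff restrict_apply')

theorem mainTheorem2:
  fixes G :: "('g, 'b) monoid_scheme" and A :: "'a set" and S :: "'g set"
    and \<mu> :: "('g \<Rightarrow> 'a) \<Rightarrow> 'a" and P :: "('g \<Rightarrow> 'a) set" and f :: "('g \<Rightarrow> 'a) \<Rightarrow> 'a"
    and s :: 'g
  assumes "group G"
    and "finite A" and "card A \<ge> 2"
    and "S \<subseteq> carrier G" and "finite S" and "\<one>\<^bsub>G\<^esub> \<in> S"
    and "\<mu> \<in> (S \<rightarrow>\<^sub>E A) \<rightarrow> A"
    and "generates S A \<one>\<^bsub>G\<^esub> P f \<mu>"
    and "s \<in> S - {\<one>\<^bsub>G\<^esub>}"
  shows "((\<exists>p \<in> P. \<exists>z \<in> (S \<rightarrow>\<^sub>E A) - P. Res S s p = Res S s z) \<longrightarrow> essential S A \<mu> s)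
       \<and> ((essential S A \<mu> s \<and> well_behaved \<one>\<^bsub>G\<^esub> P f)
            \<longrightarrow> (\<exists>p \<in> P. \<exists>z \<in> (S \<rightarrow>\<^sub>E A) - P. Res S s p = Res S s z))"
proof -
  let ?e = "\<one>\<^bsub>G\<^esub>"
  have PD: "P = {z \<in> S \<rightarrow>\<^sub>E A. \<mu> z \<noteq> z ?e}" and fD: "\<forall>p \<in> P. f p = \<mu> p"
    using assms(8) unfolding generates_def by auto
  have es: "?e \<in> S" "?e \<noteq> s" using assms(6,9) by auto
  have 1: "essential S A \<mu> s" if "\<exists>p \<in> P. \<exists>z \<in> (S \<rightarrow>\<^sub>E A) - P. Res S s p = Res S s z"
  proof -
    from that obtain p z where p: "p \<in> P" and z: "z \<in> (S \<rightarrow>\<^sub>E A) - P" and r: "Res S s p = Res S s z"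
      by blast
    have "p ?e = z ?e" using Res_eq_e[OF r es] .
    moreover have "\<mu> p \<noteq> p ?e" "p \<in> S \<rightarrow>\<^sub>E A" using p PD by auto
    moreover have "\<mu> z = z ?e" "z \<in> S \<rightarrow>\<^sub>E A" using z PD by auto
    ultimately show ?thesis unfolding essential_def using r by metis
  qed
  have 2: "\<exists>p \<in> P. \<exists>z \<in> (S \<rightarrow>\<^sub>E A) - P. Res S s p = Res S s z"
    if ess: "essential S A \<mu> s" and wb: "well_behaved ?e P f"
  proof -
    from ess obtain z w where z: "z \<in> S \<rightarrow>\<^sub>E A" and w: "w \<in> S \<rightarrow>\<^sub>E A"
      and r: "Res S s z = Res S s w" and ne: "\<mu> z \<noteq> \<mu> w"
      unfolding essential_def by blast
    have ze: "z ?e = w ?e" using Res_eq_e[OF r es] .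
    show ?thesis
    proof (cases "z \<in> P")
      case True
      show ?thesis
      proof (cases "w \<in> P")
        case True
        with \<open>z \<in> P\<close> wb ze have "f z = f w" unfolding well_behaved_def by blast
        with fD True \<open>z \<in> P\<close> ne show ?thesis by auto
      next
        case False
        then show ?thesis using \<open>z \<in> P\<close> w r by blast
      qed
    next
      case False
      show ?thesis
      proof (cases "w \<in> P")
        case True
        then show ?thesis using False z r by (metis DiffI)
      next
        case False
        with \<open>z \<notin> P\<close> z w PD have "\<mu> z = z ?e" "\<mu> w = w ?e" by auto
        with ze ne show ?thesis by simp
      qed
    qed
  qed
  show ?thesis using 1 2 by blast
qed

end
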